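(* Suppose Assumption (A) and conditions (R3) and (R4) hold. Then \[ \mathcal{G}_{q,\theta}[\tilde\mu_m,\tilde\pi_m]-\mathcal{G}_{q,\theta}[\mu,\pi]=\mathcal{O}_{\rm P}(a_m). \]
   Context: Let $Z$ be a random vector with values in $\Omega\subseteq\mathbb{R}^d$ and distribution $P$; $\mu,\pi:\Omega\to\mathbb{R}$ measurable. Fix $\alpha,\beta\in(0,1)$; $q$ satisfies $\Pr\{\mu(Z)\le q\}=\alpha$ and $\theta$ satisfies $\Pr\{\pi(Z)\le\theta\mid\mu(Z)=q\}=\beta$. For each $m$, $\tilde\mu_m,\tilde\pi_m:\Omega\to\mathbb{R}$ are random functions fitted from a sample independent of $Z$; $\Pr_m$ is probability conditional on them. For (possibly random) functions $g,h$, $\mathcal{G}_{x,y}[g,h]=\Pr_m\{h(Z)\le y\mid g(Z)=x\}$, computed conditionally on the fitted functions. $\|g\|_\infty$ is the $P$-essential supremum of $|g|$. Assumption (A): deterministic $a_m\to0$ with $\|\tilde\mu_m-\mu\|_\infty=\mathcal{O}_{\rm P}(a_m)$, $\|\tilde\pi_m-\pi\|_\infty=\mathcal{O}_{\rm P}(a_m)$ for large $m$. $\eta_m=a_m^{-1}(\tilde\mu_m-\mu)$, $\gamma_m=a_m^{-1}(\tilde\pi_m-\pi)$. (R3): for large $m$, conditionally, $(\mu(Z),\eta_m(Z),\pi(Z),\gamma_m(Z))$ has joint density $h_m(x,u,y,v)$ with $\partial_xh_m,\partial_yh_m$ existing for all arguments; $h^Y_m(x,u,y,v)=\int_{-\infty}^yh_m(x,u,\check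 y,v)d\check y$ has $\partial_xh^Y_m,\partial_x^2h^Y_m$ existing; nonnegative $\bar h_{m,i}(u,v),\bar h^Y_{m,i}(u,v)$ ($i=0,1,2$) satisfy $h_m\le\bar h_{m,0}$, $|\partial_xh_m|\le\bar h_{m,1}$, $|\partial_yh_m|\le\bar h_{m,2}$, $h^Y_m\le\bar h^Y_{m,0}$, $|\partial_xh^Y_m|\le\bar h^Y_{m,1}$, $|\partial_x^2h^Y_m|\le\bar h^Y_{m,2}$ for all $x,u,y,v$, with $\sup_m\iint(1+|u|+|v|)^r\bar h_{m,i}\,du\,dv<\infty$ and $\sup_m\iint(1+|u|+|v|)^r\bar h^Y_{m,i}\,du\,dv<\infty$ for $r=1,2$. (R4): $h^X_m(x,u,y,v)=\int_{-\infty}^xh_m(\check x,u,y,v)d\check x$ has $\partial_yh^X_m$ existing for all arguments; nonnegative $\bar h^X_{m,0},\bar h^X_{m,1}$ of $(u,v)$ satisfy $h^X_m\le\bar h^X_{m,0}$, $|\partial_yh^X_m|\le\bar h^X_{m,1}$, and $\sup_m\iint(1+|u|+|v|)\bar h^X_{m,i}\,du\,dv<\infty$, $i=0,1$. *)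

theory Defs
  imports "HOL-Probability.Probability"
begin

text \<open>Conditional probability Pr{h(Z) <= y | g(Z) = x} under the distribution M of Z,
  evaluated pointwise at g(Z) = x as the limit of elementary conditional probabilities
  given |g(Z) - x| <= eps, eps -> 0+.\<close>
definition cond_prob_at ::
  "'a measure \<Rightarrow> ('a \<Rightarrow> real) \<Rightarrow> ('a \<Rightarrow> real) \<Rightarrow> real \<Rightarrow> real \<Rightarrow> real" where
  "cond_prob_at M g h x y =
     Lim (at_right 0)
       (\<lambda>\<epsilon>::real. measure M {z \<in> space M. h z \<le> y \<and> \<bar>g z - x\<bar> \<le> \<epsilon>}
                / measure M {z \<in> space M. \<bar>g z - x\<bar> \<le> \<epsilon>})"

definition ess_norm :: "'a measure \<Rightarrow> ('a \<Rightarrow> real) \<Rightarrow> ereal" where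
  "ess_norm M f = esssup M (\<lambda>z. ereal \<bar>f z\<bar>)"

text \<open>Stochastic boundedness X_m = O_P(a_m) w.r.t. the probability space Q of the
  fitting sample (outer probability, so no measurability of X_m is needed).\<close>
definition bigO_P :: "'w measure \<Rightarrow> (nat \<Rightarrow> 'w \<Rightarrow> ereal) \<Rightarrow> (nat \<Rightarrow> real) \<Rightarrow> bool" where
  "bigO_P Q X a \<longleftrightarrow>
     (\<forall>\<epsilon>>0. \<exists>C::real. \<exists>N. \<forall>m\<ge>N. \<exists>A\<in>sets Q.
        {\<omega> \<in> space Q. \<bar>X m \<omega>\<bar> > ereal (C * a m)} \<subseteq> A \<and> measure Q A < \<epsilon>)"

end

theory Submission
  imports Defs
begin

lemma pairB:
  "f \<in> borel_measurable (borel \<Otimes>\<^sub>M borel) \<Longrightarrow> (f :: 'a::second_countable_topology \<times> 'b::second_countable_topology \<Rightarrow> 'c::topological_space) \<in> borel_measurable borel"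
  by (simp add: borel_prod)

lemma pair4B:
  "f \<in> borel_measurable (borel \<Otimes>\<^sub>M (borel \<Otimes>\<^sub>M (borel \<Otimes>\<^sub>M borel))) \<Longrightarrow> (f :: real \<times> real \<times> real \<times> real \<Rightarrow> 'c::topological_space) \<in> borel_measurable borel"
  by (simp add: borel_prod)

lemma sets_lb2: "sets (lborel :: (real \<times> real) measure) = sets (borel \<Otimes>\<^sub>M borel)"
  by (simp only: sets_lborel borel_prod)

lemma meas_lb11: "f \<in> borel_measurable (borel \<Otimes>\<^sub>M borel) \<Longrightarrow> (f :: real \<times> real \<Rightarrow> 'c::topological_space) \<in> borel_measurable (lborel \<Otimes>\<^sub>M lborel)"
  using measurable_cong_sets[OF sets_pair_measure_cong[OF sets_lborel sets_lborel] refl] by blast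

lemma meas_lb12: "f \<in> borel_measurable (borel \<Otimes>\<^sub>M (borel \<Otimes>\<^sub>M borel)) \<Longrightarrow> (f :: real \<times> (real \<times> real) \<Rightarrow> 'c::topological_space) \<in> borel_measurable (lborel \<Otimes>\<^sub>M lborel)"
  using measurable_cong_sets[OF sets_pair_measure_cong[OF sets_lborel sets_lb2] refl] by blast

lemma meas_lb21: "f \<in> borel_measurable ((borel \<Otimes>\<^sub>M borel) \<Otimes>\<^sub>M borel) \<Longrightarrow> (f :: (real \<times> real) \<times> real \<Rightarrow> 'c::topological_space) \<in> borel_measurable (lborel \<Otimes>\<^sub>M lborel)"
  using measurable_cong_sets[OF sets_pair_measure_cong[OF sets_lb2 sets_lborel] refl] by blast

lemma nn_lborel_meas[measurable (raw)]:
  "case_prod f \<in> borel_measurable (N \<Otimes>\<^sub>M borel) \<Longrightarrow> (\<lambda>x. \<integral>\<^sup>+y. f x y \<partial>(lborel::real measure)) \<in> borel_measurable N"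
  using measurable_cong_sets[OF sets_pair_measure_cong[OF refl sets_lborel] refl, of N "borel :: ennreal measure"]
    lborel.borel_measurable_nn_integral[of f N] by blast

lemma lim_by_bound:
  fixes f :: "real \<Rightarrow> real"
  assumes "\<And>e. e > 0 \<Longrightarrow> \<bar>f e - l\<bar> \<le> C * e"
  shows "(f \<longlongrightarrow> l) (at_right 0)"
proof (rule tendsto_sandwich)
  have ev: "eventually (\<lambda>e. e > (0::real)) (at_right 0)"
    unfolding eventually_at_right_field by (intro exI[of _ 1]) auto
  show "eventually (\<lambda>e. l - C * e \<le> f e) (at_right 0)"
    using ev by eventually_elim (use assms in \<open>force simp: abs_le_iff\<close>)
  show "eventually (\<lambda>e. f e \<le> l + C * e) (at_right 0)"
    using ev by eventually_elim (use assms in \<open>force simp: abs_le_iff\<close>)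
  have "((\<lambda>e. l - C * e) \<longlongrightarrow> l - C * 0) (at_right 0)" by (intro tendsto_intros)
  then show "((\<lambda>e. l - C * e) \<longlongrightarrow> l) (at_right 0)" by simp
  have "((\<lambda>e. l + C * e) \<longlongrightarrow> l + C * 0) (at_right 0)" by (intro tendsto_intros)
  then show "((\<lambda>e. l + C * e) \<longlongrightarrow> l) (at_right 0)" by simp
qed

lemma ratio_bound:
  fixes G0 G1 S0 S1 d f0 Bd :: real
  assumes f0: "f0 > 0" and S0: "S0 = f0" and S1: "\<bar>S1 - S0\<bar> \<le> d" and d: "d \<le> f0 / 2"
    and G0: "0 \<le> G0" "G0 \<le> Bd" and G1: "\<bar>G1 - G0\<bar> \<le> d"
  shows "\<bar>G1 / S1 - G0 / S0\<bar> \<le> d * (2 / f0 + 2 * Bd / (f0 * f0))"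
proof -
  have d0: "0 \<le> d" using S1 by linarith
  have S1p: "S1 \<ge> f0 / 2" using S1 d S0 by (simp add: abs_le_iff)
  then have S1pos: "S1 > 0" using f0 by linarith
  have "G1 / S1 - G0 / S0 = ((G1 - G0) * S0 + G0 * (S0 - S1)) / (S0 * S1)"
    using S1pos f0 S0 by (simp add: field_simps)
  then have "\<bar>G1 / S1 - G0 / S0\<bar> = \<bar>(G1 - G0) * S0 + G0 * (S0 - S1)\<bar> / (S0 * S1)"
    using S1pos f0 S0 by (simp add: abs_div abs_mult)
  also have "\<dots> \<le> (d * f0 + Bd * d) / (f0 * (f0 / 2))"
  proof (rule frac_le)
    have "\<bar>(G1 - G0) * S0\<bar> \<le> d * f0" using G1 S0 f0 by (simp add: abs_mult mult_right_mono)
    moreover have "\<bar>G0 * (S0 - S1)\<bar> \<le> Bd * d"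
      using G0 S1 by (simp add: abs_mult abs_minus_commute mult_mono)
    ultimately show "\<bar>(G1 - G0) * S0 + G0 * (S0 - S1)\<bar> \<le> d * f0 + Bd * d" by (simp add: abs_triangle_ineq order_trans[OF abs_triangle_ineq])
    show "0 \<le> d * f0 + Bd * d" using d0 f0 G0 by simp
    show "0 < f0 * (f0 / 2)" using f0 by simp
    show "f0 * (f0 / 2) \<le> S0 * S1" using S0 S1p f0 by (simp add: mult_left_mono)
  qed
  also have "\<dots> = d * (2 / f0 + 2 * Bd / (f0 * f0))" using f0 by (simp add: field_simps)
  finally show ?thesis .
qed

lemma nn_pair:
  fixes g :: "'a::euclidean_space \<times> 'b::euclidean_space \<Rightarrow> ennreal"
  assumes "g \<in> borel_measurable borel"
  shows "integral\<^sup>N lborel g = (\<integral>\<^sup>+x. \<integral>\<^sup>+y. g (x,y) \<partial>lborel \<partial>lborel)"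
proof -
  have "integral\<^sup>N lborel g = integral\<^sup>N (lborel \<Otimes>\<^sub>M lborel) g" by (simp add: lborel_prod)
  also have "\<dots> = (\<integral>\<^sup>+x. \<integral>\<^sup>+y. g (x,y) \<partial>lborel \<partial>lborel)"
    by (rule lborel.nn_integral_fst[symmetric]) (simp add: lborel_prod assms)
  finally show ?thesis .
qed

lemma nn4:
  fixes f :: "real \<times> real \<times> real \<times> real \<Rightarrow> ennreal"
  assumes [measurable]: "f \<in> borel_measurable borel"
  shows "integral\<^sup>N lborel f = (\<integral>\<^sup>+x. \<integral>\<^sup>+u. \<integral>\<^sup>+y. \<integral>\<^sup>+v. f (x,u,y,v) \<partial>lborel \<partial>lborel \<partial>lborel \<partial>lborel)"
  apply (subst nn_pair, simp)
  apply (rule nn_integral_cong)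
  apply (subst nn_pair, simp)
  apply (rule nn_integral_cong)
  apply (subst nn_pair, simp)
  apply simp
  done

lemma nn_zero_generic:
  assumes "F \<in> borel_measurable M" "(\<integral>\<^sup>+x. F x \<partial>M) \<noteq> \<infinity>"
    "\<And>x. F x \<noteq> \<infinity> \<Longrightarrow> G1 x = G2 x"
  shows "(\<integral>\<^sup>+x. G1 x \<partial>M) = (\<integral>\<^sup>+x. G2 x \<partial>M)"
proof -
  have "AE x in M. F x \<noteq> \<infinity>" using nn_integral_PInf_AE[OF assms(1,2)] .
  then have "AE x in M. G1 x = G2 x" by eventually_elim (use assms(3) in auto)
  then show ?thesis by (rule nn_integral_cong_AE)
qed

locale dens4 =
  fixes P :: "'a measure" and mu eta pi gam :: "'a \<Rightarrow> real"
    and H :: "real \<Rightarrow> real \<Rightarrow> real \<Rightarrow> real \<Rightarrow> real"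
    and B0 BY0 BY1 :: "real \<Rightarrow> real \<Rightarrow> real"
  assumes PS: "prob_space P"
    and dist: "distributed P lborel (\<lambda>z. (mu z, eta z, pi z, gam z)) (\<lambda>(x,u,y,v). ennreal (H x u y v))"
    and H_nn: "\<And>x u y v. 0 \<le> H x u y v"
    and H_le: "\<And>x u y v. H x u y v \<le> B0 u v"
    and HY_le: "\<And>x u y v. (LINT t:{..y}|lborel. H x u t v) \<le> BY0 u v"
    and HY_diff: "\<And>x u y v. (\<lambda>x'. LINT t:{..y}|lborel. H x' u t v) differentiable at x"
    and HY_der: "\<And>x u y v. \<bar>deriv (\<lambda>x'. LINT t:{..y}|lborel. H x' u t v) x\<bar> \<le> BY1 u v"
    and B0m: "(\<lambda>(u,v). B0 u v) \<in> borel_measurable lborel"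
    and BY0m: "(\<lambda>(u,v). BY0 u v) \<in> borel_measurable lborel"
    and BY1m: "(\<lambda>(u,v). BY1 u v) \<in> borel_measurable lborel"
    and B0i: "integrable lborel (\<lambda>(u,v). (1 + \<bar>u\<bar> + \<bar>v\<bar>) * B0 u v)"
    and BY0i: "integrable lborel (\<lambda>(u,v). (1 + \<bar>u\<bar> + \<bar>v\<bar>) * BY0 u v)"
    and BY1i: "integrable lborel (\<lambda>(u,v). (1 + \<bar>u\<bar> + \<bar>v\<bar>) * BY1 u v)"
begin

lemma H4m: "(\<lambda>w. H (fst w) (fst (snd w)) (fst (snd (snd w))) (snd (snd (snd w)))) \<in> borel_measurable borel"
proof -
  have "(\<lambda>(x,u,y,v). ennreal (H x u y v)) \<in> borel_measurable borel"
    using distributed_borel_measurable[OF dist] by simp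
  then have "(\<lambda>w. enn2real ((\<lambda>(x,u,y,v). ennreal (H x u y v)) w)) \<in> borel_measurable borel"
    by measurable
  moreover have "(\<lambda>w. enn2real ((\<lambda>(x,u,y,v). ennreal (H x u y v)) w)) = 
     (\<lambda>w. H (fst w) (fst (snd w)) (fst (snd (snd w))) (snd (snd (snd w))))"
    by (auto simp: H_nn split: prod.splits)
  ultimately show ?thesis by simp
qed

lemma H_meas[measurable]:
  assumes [measurable]: "f \<in> borel_measurable M" "g \<in> borel_measurable M" "k \<in> borel_measurable M" "l \<in> borel_measurable M"
  shows "(\<lambda>z. H (f z) (g z) (k z) (l z)) \<in> borel_measurable M"
proof -
  have "(\<lambda>z. (f z, g z, k z, l z)) \<in> M \<rightarrow>\<^sub>M borel" by measurable
  from measurable_compose[OF this H4m] show ?thesis by simp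
qed

definition "KY x u y v = (\<integral>\<^sup>+t. indicator {..y} t * ennreal (H x u t v) \<partial>lborel)"
definition "Hinf x u v = (\<integral>\<^sup>+t. ennreal (H x u t v) \<partial>lborel)"
definition "HY x u y v = (LINT t:{..y}|lborel. H x u t v)"

lemma KY_meas[measurable]:
  assumes [measurable]: "f \<in> borel_measurable M" "g \<in> borel_measurable M" "k \<in> borel_measurable M" "l \<in> borel_measurable M"
  shows "(\<lambda>z. KY (f z) (g z) (k z) (l z)) \<in> borel_measurable M"
proof -
  have "(\<lambda>(z,t). indicator {..k z} t * ennreal (H (f z) (g z) t (l z))) \<in> borel_measurable (M \<Otimes>\<^sub>M borel)"
  proof -
    have "(\<lambda>(z,t). (if t \<le> k z then 1 else 0) * ennreal (H (f z) (g z) t (l z))) \<in> borel_measurable (M \<Otimes>\<^sub>M borel)"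
      by measurable
    then show ?thesis by (simp add: indicator_def[abs_def] atMost_def)
  qed
  then have "(\<lambda>(z,t). indicator {..k z} t * ennreal (H (f z) (g z) t (l z))) \<in> borel_measurable (M \<Otimes>\<^sub>M lborel)"
    using measurable_cong_sets[OF sets_pair_measure_cong[OF refl sets_lborel] refl] by blast
  then show ?thesis unfolding KY_def by (rule lborel.borel_measurable_nn_integral)
qed

lemma Hinf_meas[measurable]:
  assumes [measurable]: "f \<in> borel_measurable M" "g \<in> borel_measurable M" "l \<in> borel_measurable M"
  shows "(\<lambda>z. Hinf (f z) (g z) (l z)) \<in> borel_measurable M"
proof -
  have "(\<lambda>(z,t). ennreal (H (f z) (g z) t (l z))) \<in> borel_measurable (M \<Otimes>\<^sub>M borel)"
    by measurable
  then have "(\<lambda>(z,t). ennreal (H (f z) (g z) t (l z))) \<in> borel_measurable (M \<Otimes>\<^sub>M lborel)"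
    using measurable_cong_sets[OF sets_pair_measure_cong[OF refl sets_lborel] refl] by blast
  then show ?thesis unfolding Hinf_def by (rule lborel.borel_measurable_nn_integral)
qed

lemma HY_eq: "HY x u y v = enn2real (KY x u y v)"
proof -
  have "HY x u y v = (\<integral>t. indicator {..y} t * H x u t v \<partial>lborel)"
    unfolding HY_def set_lebesgue_integral_def by simp
  also have "\<dots> = enn2real (\<integral>\<^sup>+t. ennreal (indicator {..y} t * H x u t v) \<partial>lborel)"
    by (rule integral_eq_nn_integral) (auto simp: H_nn)
  also have "\<dots> = enn2real (KY x u y v)" unfolding KY_def
    by (intro arg_cong[where f=enn2real] nn_integral_cong) (auto simp: indicator_def)
  finally show ?thesis .
qed

lemma HY_meas[measurable]:
  assumes [measurable]: "f \<in> borel_measurable M" "g \<in> borel_measurable M" "k \<in> borel_measurable M" "l \<in> borel_measurable M"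
  shows "(\<lambda>z. HY (f z) (g z) (k z) (l z)) \<in> borel_measurable M"
  unfolding HY_eq by measurable

lemma B0_nn: "0 \<le> B0 u v" using H_nn[of 0 u 0 v] H_le[of 0 u 0 v] by linarith

lemma HY_nn: "0 \<le> HY x u y v" unfolding HY_eq by simp

lemma BY0_nn: "0 \<le> BY0 u v" using HY_nn[of 0 u 0 v] HY_le[where x=0 and u=u and y=0 and v=v] unfolding HY_def by linarith

lemma BY1_nn: "0 \<le> BY1 u v" using HY_der[where x=0 and u=u and y=0 and v=v] by linarith

lemma KY_mono: "y1 \<le> y2 \<Longrightarrow> KY x u y1 v \<le> KY x u y2 v"
  unfolding KY_def by (intro nn_integral_mono) (auto simp: indicator_def)

lemma KY_le_Hinf: "KY x u y v \<le> Hinf x u v"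
  unfolding KY_def Hinf_def by (intro nn_integral_mono) (auto simp: indicator_def)

lemma KY_split:
  assumes "y1 \<le> y2"
  shows "KY x u y2 v \<le> KY x u y1 v + ennreal (B0 u v * (y2 - y1))"
proof -
  have "KY x u y2 v \<le> (\<integral>\<^sup>+t. indicator {..y1} t * ennreal (H x u t v) + ennreal (B0 u v) * indicator {y1<..y2} t \<partial>lborel)"
    unfolding KY_def
    by (intro nn_integral_mono) (auto simp: indicator_def H_le intro: ennreal_leI)
  also have "\<dots> = KY x u y1 v + ennreal (B0 u v) * emeasure lborel {y1<..y2}"
    unfolding KY_def
    by (subst nn_integral_add) (auto simp: nn_integral_cmult_indicator)
  also have "\<dots> = KY x u y1 v + ennreal (B0 u v * (y2 - y1))"
    using assms B0_nn by (simp add: ennreal_mult)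
  finally show ?thesis .
qed

lemma Hinf_fin:
  assumes "KY x u y0 v \<noteq> \<infinity>"
  shows "Hinf x u v \<le> ennreal (BY0 u v)"
proof -
  define f where "f n t = indicator {..y0 + real n} t * ennreal (H x u t v)" for n t
  have inc: "incseq f"
    unfolding f_def incseq_def le_fun_def by (auto simp: indicator_def)
  have fm: "f n \<in> borel_measurable lborel" for n unfolding f_def by measurable
  have sup: "(SUP n. f n t) = ennreal (H x u t v)" for t
  proof (rule antisym)
    show "(SUP n. f n t) \<le> ennreal (H x u t v)"
      by (rule SUP_least) (auto simp: f_def indicator_def)
    obtain n :: nat where "t - y0 \<le> real n" using real_arch_simple by blast
    then have "f n t = ennreal (H x u t v)" by (simp add: f_def)
    then show "ennreal (H x u t v) \<le> (SUP n. f n t)" by (metis SUP_upper UNIV_I)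
  qed
  have "Hinf x u v = (SUP n. integral\<^sup>N lborel (f n))"
    unfolding Hinf_def sup[symmetric] by (rule nn_integral_monotone_convergence_SUP[OF inc fm])
  also have "\<dots> \<le> ennreal (BY0 u v)"
  proof (rule SUP_least)
    fix n
    have e: "integral\<^sup>N lborel (f n) = KY x u (y0 + real n) v" unfolding f_def KY_def by simp
    have "KY x u (y0 + real n) v \<le> KY x u y0 v + ennreal (B0 u v * (y0 + real n - y0))"
      by (rule KY_split) simp
    also have "\<dots> < \<infinity>" using assms by (simp add: less_top)
    finally have fin: "KY x u (y0 + real n) v \<noteq> \<infinity>" by simp
    have "KY x u (y0 + real n) v = ennreal (HY x u (y0 + real n) v)"
      unfolding HY_eq using fin by (simp add: ennreal_enn2real_if)
    also have "\<dots> \<le> ennreal (BY0 u v)" unfolding HY_def by (intro ennreal_leI HY_le)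
    finally show "integral\<^sup>N lborel (f n) \<le> ennreal (BY0 u v)" using e by simp
  qed
  finally show ?thesis .
qed

lemma KY_HY: "Hinf x u v \<noteq> \<infinity> \<Longrightarrow> KY x u y v = ennreal (HY x u y v)"
proof -
  assume a: "Hinf x u v \<noteq> \<infinity>"
  have "KY x u y v \<noteq> \<infinity>"
  proof
    assume "KY x u y v = \<infinity>"
    then have "\<infinity> \<le> Hinf x u v" using KY_le_Hinf[of x u y v] by simp
    then show False using a by (simp add: top_unique)
  qed
  then show ?thesis unfolding HY_eq by (simp add: ennreal_enn2real_if)
qed

lemma HY_inf: "Hinf x u v = \<infinity> \<Longrightarrow> HY x u y v = 0"
proof -
  assume a: "Hinf x u v = \<infinity>"
  have "KY x u y v = \<infinity>"
  proof (rule ccontr)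
    assume "KY x u y v \<noteq> \<infinity>"
    from Hinf_fin[OF this] a show False by (simp add: top_unique)
  qed
  then show ?thesis unfolding HY_eq by simp
qed

lemma HY_ylip_aux:
  assumes "y1 \<le> y2"
  shows "\<bar>HY x u y1 v - HY x u y2 v\<bar> \<le> B0 u v * \<bar>y1 - y2\<bar>"
proof (cases "Hinf x u v = \<infinity>")
  case True
  then show ?thesis using HY_inf[OF True] B0_nn by simp
next
  case False
  have "ennreal (HY x u y2 v) \<le> ennreal (HY x u y1 v) + ennreal (B0 u v * (y2 - y1))"
    using KY_split[OF assms, of x u v] KY_HY[OF False] by simp
  then have 1: "HY x u y2 v \<le> HY x u y1 v + B0 u v * (y2 - y1)"
    using HY_nn B0_nn assms by (simp add: ennreal_plus[symmetric] del: ennreal_plus)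
  have "ennreal (HY x u y1 v) \<le> ennreal (HY x u y2 v)"
    using KY_mono[OF assms, of x u v] KY_HY[OF False] by simp
  then have 2: "HY x u y1 v \<le> HY x u y2 v" using HY_nn by simp
  show ?thesis using 1 2 assms by (simp add: abs_if)
qed

lemma HY_ylip: "\<bar>HY x u y1 v - HY x u y2 v\<bar> \<le> B0 u v * \<bar>y1 - y2\<bar>"
proof (cases "y1 \<le> y2")
  case True then show ?thesis using HY_ylip_aux[of y1 y2 x u v] by simp
next
  case False then have "y2 \<le> y1" by simp
  from HY_ylip_aux[OF this, of x u v] show ?thesis by (simp add: abs_minus_commute)
qed

lemma HY_xlip_aux:
  assumes "x1 < x2"
  shows "\<bar>HY x1 u y v - HY x2 u y v\<bar> \<le> BY1 u v * \<bar>x1 - x2\<bar>"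
proof -
  have "\<exists>z. x1 < z \<and> z < x2 \<and> HY x2 u y v - HY x1 u y v = (x2 - x1) * deriv (\<lambda>x'. HY x' u y v) z"
    apply (rule MVT2[OF assms])
    unfolding HY_def using HY_diff DERIV_deriv_iff_real_differentiable by blast
  then obtain z where z: "HY x2 u y v - HY x1 u y v = (x2 - x1) * deriv (\<lambda>x'. HY x' u y v) z" by blast
  have "\<bar>deriv (\<lambda>x'. HY x' u y v) z\<bar> \<le> BY1 u v" unfolding HY_def using HY_der by blast
  then have "\<bar>(x2 - x1) * deriv (\<lambda>x'. HY x' u y v) z\<bar> \<le> (x2 - x1) * BY1 u v"
    using assms by (simp add: abs_mult mult_left_mono)
  then show ?thesis using z assms by (simp add: abs_minus_commute mult.commute)
qed

lemma HY_xlip: "\<bar>HY x1 u y v - HY x2 u y v\<bar> \<le> BY1 u v * \<bar>x1 - x2\<bar>"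
proof (cases x1 x2 rule: linorder_cases)
  case less then show ?thesis using HY_xlip_aux[of x1 x2 u y v] by simp
next
  case equal then show ?thesis by simp
next
  case greater
  from HY_xlip_aux[OF this, of u y v] show ?thesis by (simp add: abs_minus_commute)
qed


lemma wint:
  fixes B :: "real \<Rightarrow> real \<Rightarrow> real"
  assumes m: "(\<lambda>(u,v). B u v) \<in> borel_measurable lborel"
    and i: "integrable lborel (\<lambda>(u,v). (1 + \<bar>u\<bar> + \<bar>v\<bar>) * B u v)"
    and nn: "\<And>u v. 0 \<le> B u v"
  shows "integrable lborel (\<lambda>p. B (fst p) (snd p))"
    "integrable lborel (\<lambda>p. \<bar>fst p\<bar> * B (fst p) (snd p))"
    "integrable lborel (\<lambda>p. \<bar>snd p\<bar> * B (fst p) (snd p))"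
proof -
  have m'[measurable]: "(\<lambda>p. B (fst p) (snd p)) \<in> borel_measurable (borel \<Otimes>\<^sub>M borel)" using m by (simp add: case_prod_beta' borel_prod)
  have i': "integrable lborel (\<lambda>p. (1 + \<bar>fst p\<bar> + \<bar>snd p\<bar>) * B (fst p) (snd p))"
    using i by (simp add: case_prod_beta')
  have pt: "norm (B a b) \<le> norm ((1 + \<bar>a\<bar> + \<bar>b\<bar>) * B a b)"
     "norm (\<bar>a\<bar> * B a b) \<le> norm ((1 + \<bar>a\<bar> + \<bar>b\<bar>) * B a b)"
     "norm (\<bar>b\<bar> * B a b) \<le> norm ((1 + \<bar>a\<bar> + \<bar>b\<bar>) * B a b)" for a b
  proof -
    have "0 \<le> (\<bar>a\<bar> + \<bar>b\<bar>) * B a b" "0 \<le> (1 + \<bar>b\<bar>) * B a b" "0 \<le> (1 + \<bar>a\<bar>) * B a b"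
      using nn[of a b] by simp_all
    then show "norm (B a b) \<le> norm ((1 + \<bar>a\<bar> + \<bar>b\<bar>) * B a b)"
     "norm (\<bar>a\<bar> * B a b) \<le> norm ((1 + \<bar>a\<bar> + \<bar>b\<bar>) * B a b)"
     "norm (\<bar>b\<bar> * B a b) \<le> norm ((1 + \<bar>a\<bar> + \<bar>b\<bar>) * B a b)"
      using nn[of a b] by (simp_all add: distrib_right abs_mult)
  qed
  show "integrable lborel (\<lambda>p. B (fst p) (snd p))"
    by (rule Bochner_Integration.integrable_bound[OF i']) (simp only: measurable_lborel2, rule pairB, measurable, rule AE_I2, rule pt(1))
  show "integrable lborel (\<lambda>p. \<bar>fst p\<bar> * B (fst p) (snd p))"
    by (rule Bochner_Integration.integrable_bound[OF i']) (simp only: measurable_lborel2, rule pairB, measurable, rule AE_I2, rule pt(2))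
  show "integrable lborel (\<lambda>p. \<bar>snd p\<bar> * B (fst p) (snd p))"
    by (rule Bochner_Integration.integrable_bound[OF i']) (simp only: measurable_lborel2, rule pairB, measurable, rule AE_I2, rule pt(3))
qed

lemma B0m'[measurable]: "(\<lambda>p. B0 (fst p) (snd p)) \<in> borel_measurable borel"
  using B0m by (simp add: case_prod_beta')
lemma BY0m'[measurable]: "(\<lambda>p. BY0 (fst p) (snd p)) \<in> borel_measurable borel"
  using BY0m by (simp add: case_prod_beta')
lemma BY1m'[measurable]: "(\<lambda>p. BY1 (fst p) (snd p)) \<in> borel_measurable borel"
  using BY1m by (simp add: case_prod_beta')

lemmas B0w = wint[OF B0m B0i B0_nn]
lemmas BY0w = wint[OF BY0m BY0i BY0_nn]
lemmas BY1w = wint[OF BY1m BY1i BY1_nn]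

definition "G c y x = (\<integral>p. HY (x - c * fst p) (fst p) (y - c * snd p) (snd p) \<partial>lborel)"
definition "IB0 = (\<integral>p. BY0 (fst p) (snd p) \<partial>lborel)"
definition "L = (\<integral>p. BY1 (fst p) (snd p) \<partial>lborel)"
definition "K = (\<integral>p. \<bar>fst p\<bar> * BY1 (fst p) (snd p) + \<bar>snd p\<bar> * B0 (fst p) (snd p) \<partial>lborel)"

lemma G_int: "integrable lborel (\<lambda>p::real\<times>real. HY (x - c * fst p) (fst p) (y - c * snd p) (snd p))"
  by (rule Bochner_Integration.integrable_bound[OF BY0w(1)])
     (simp only: measurable_lborel2, rule pairB, measurable, auto simp: HY_nn BY0_nn HY_le[unfolded HY_def[symmetric]])

lemma G_nn: "0 \<le> G c y x" unfolding G_def by (rule integral_nonneg_AE) (simp add: HY_nn)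

lemma G_le: "G c y x \<le> IB0" unfolding G_def IB0_def
  by (rule Bochner_Integration.integral_mono[OF G_int BY0w(1)]) (simp add: HY_le[unfolded HY_def[symmetric]])

lemma L_nn: "0 \<le> L" unfolding L_def by (rule integral_nonneg_AE) (simp add: BY1_nn)

lemma G_xlip: "\<bar>G c y x1 - G c y x2\<bar> \<le> L * \<bar>x1 - x2\<bar>"
proof -
  have "\<bar>G c y x1 - G c y x2\<bar> = \<bar>\<integral>p. HY (x1 - c * fst p) (fst p) (y - c * snd p) (snd p) - HY (x2 - c * fst p) (fst p) (y - c * snd p) (snd p) \<partial>lborel\<bar>"
    unfolding G_def by (subst Bochner_Integration.integral_diff[OF G_int G_int]) simp
  also have "\<dots> \<le> (\<integral>p. \<bar>HY (x1 - c * fst p) (fst p) (y - c * snd p) (snd p) - HY (x2 - c * fst p) (fst p) (y - c * snd p) (snd p)\<bar> \<partial>lborel)"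
    by (rule integral_abs_bound)
  also have "\<dots> \<le> (\<integral>p. BY1 (fst p) (snd p) * \<bar>x1 - x2\<bar> \<partial>lborel)"
  proof (rule Bochner_Integration.integral_mono)
    show "integrable lborel (\<lambda>p. \<bar>HY (x1 - c * fst p) (fst p) (y - c * snd p) (snd p) - HY (x2 - c * fst p) (fst p) (y - c * snd p) (snd p)\<bar>)"
      by (intro integrable_abs Bochner_Integration.integrable_diff G_int)
    show "integrable lborel (\<lambda>p. BY1 (fst p) (snd p) * \<bar>x1 - x2\<bar>)"
      by (intro integrable_mult_left BY1w(1))
    fix p :: "real \<times> real"
    show "\<bar>HY (x1 - c * fst p) (fst p) (y - c * snd p) (snd p) - HY (x2 - c * fst p) (fst p) (y - c * snd p) (snd p)\<bar> \<le> BY1 (fst p) (snd p) * \<bar>x1 - x2\<bar>"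
      using HY_xlip[of "x1 - c * fst p" "fst p" "y - c * snd p" "snd p" "x2 - c * fst p"] by simp
  qed
  also have "\<dots> = L * \<bar>x1 - x2\<bar>" unfolding L_def by simp
  finally show ?thesis .
qed

lemma G_cdiff: "\<bar>G c y x - G 0 y x\<bar> \<le> \<bar>c\<bar> * K"
proof -
  let ?f = "\<lambda>p. HY (x - c * fst p) (fst p) (y - c * snd p) (snd p)"
  let ?g = "\<lambda>p. HY (x - 0 * fst p) (fst p) (y - 0 * snd p) (snd p)"
  have Kint: "integrable lborel (\<lambda>p. \<bar>fst p\<bar> * BY1 (fst p) (snd p) + \<bar>snd p\<bar> * B0 (fst p) (snd p))"
    using BY1w(2) B0w(3) by simp
  have pt: "\<bar>?f p - ?g p\<bar> \<le> \<bar>c\<bar> * (\<bar>fst p\<bar> * BY1 (fst p) (snd p) + \<bar>snd p\<bar> * B0 (fst p) (snd p))" for p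
  proof -
    obtain u v where p: "p = (u,v)" by fastforce
    have 1: "\<bar>HY (x - c * u) u (y - c * v) v - HY x u (y - c * v) v\<bar> \<le> BY1 u v * \<bar>c * u\<bar>"
      using HY_xlip[of "x - c * u" u "y - c * v" v x] by simp
    have 2: "\<bar>HY x u (y - c * v) v - HY x u y v\<bar> \<le> B0 u v * \<bar>c * v\<bar>"
      using HY_ylip[of x u "y - c * v" v y] by simp
    have "\<bar>HY (x - c * u) u (y - c * v) v - HY x u y v\<bar> \<le> BY1 u v * \<bar>c * u\<bar> + B0 u v * \<bar>c * v\<bar>"
      using 1 2 by linarith
    then show ?thesis unfolding p by (simp add: abs_mult algebra_simps)
  qed
  have "\<bar>G c y x - G 0 y x\<bar> = \<bar>\<integral>p. ?f p - ?g p \<partial>lborel\<bar>"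
    unfolding G_def by (subst Bochner_Integration.integral_diff[OF G_int G_int]) simp
  also have "\<dots> \<le> (\<integral>p. \<bar>?f p - ?g p\<bar> \<partial>lborel)"
    by (rule integral_abs_bound)
  also have "\<dots> \<le> (\<integral>p. \<bar>c\<bar> * (\<bar>fst p\<bar> * BY1 (fst p) (snd p) + \<bar>snd p\<bar> * B0 (fst p) (snd p)) \<partial>lborel)"
    by (rule Bochner_Integration.integral_mono[OF _ _ pt]) (intro integrable_abs Bochner_Integration.integrable_diff G_int integrable_mult_right Kint)+
  also have "\<dots> = \<bar>c\<bar> * K" unfolding K_def by simp
  finally show ?thesis .
qed


definition "f4 w = ennreal (H (fst w) (fst (snd w)) (fst (snd (snd w))) (snd (snd (snd w))))"

lemma f4_eq: "(\<lambda>(x,u,y,v). ennreal (H x u y v)) = f4"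
  unfolding f4_def by (auto simp: fun_eq_iff split: prod.splits)

lemma f4m[measurable]: "f4 \<in> borel_measurable borel"
  unfolding f4_def by (rule pair4B) measurable

lemma Xm: "(\<lambda>z. (mu z, eta z, pi z, gam z)) \<in> measurable P lborel"
  using distributed_measurable[OF dist] .

lemma event:
  assumes S: "S \<in> sets borel"
  shows "emeasure P {z \<in> space P. (mu z, eta z, pi z, gam z) \<in> S} = (\<integral>\<^sup>+w. f4 w * indicator S w \<partial>lborel)"
proof -
  have "{z \<in> space P. (mu z, eta z, pi z, gam z) \<in> S} = (\<lambda>z. (mu z, eta z, pi z, gam z)) -` S \<inter> space P" by auto
  then have "emeasure P {z \<in> space P. (mu z, eta z, pi z, gam z) \<in> S} = emeasure (distr P lborel (\<lambda>z. (mu z, eta z, pi z, gam z))) S"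
    using S by (simp add: emeasure_distr[OF Xm])
  also have "\<dots> = emeasure (density lborel f4) S"
    using distributed_distr_eq_density[OF dist] by (simp add: f4_eq)
  also have "\<dots> = (\<integral>\<^sup>+w. f4 w * indicator S w \<partial>lborel)"
    using S by (simp add: emeasure_density)
  finally show ?thesis .
qed

lemma iter:
  assumes g[measurable]: "g \<in> borel_measurable (borel \<Otimes>\<^sub>M (borel \<Otimes>\<^sub>M (borel \<Otimes>\<^sub>M borel)))"
  shows "(\<integral>\<^sup>+w. f4 w * g w \<partial>lborel) = (\<integral>\<^sup>+x. \<integral>\<^sup>+u. \<integral>\<^sup>+v. \<integral>\<^sup>+y. ennreal (H x u y v) * g (x,u,y,v) \<partial>lborel \<partial>lborel \<partial>lborel \<partial>lborel)"
proof -
  have "(\<lambda>w. f4 w * g w) \<in> borel_measurable borel"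
    unfolding f4_def by (rule pair4B) measurable
  then have "(\<integral>\<^sup>+w. f4 w * g w \<partial>lborel) = (\<integral>\<^sup>+x. \<integral>\<^sup>+u. \<integral>\<^sup>+y. \<integral>\<^sup>+v. ennreal (H x u y v) * g (x,u,y,v) \<partial>lborel \<partial>lborel \<partial>lborel \<partial>lborel)"
    by (subst nn4) (simp_all add: f4_def)
  also have "\<dots> = (\<integral>\<^sup>+x. \<integral>\<^sup>+u. \<integral>\<^sup>+v. \<integral>\<^sup>+y. ennreal (H x u y v) * g (x,u,y,v) \<partial>lborel \<partial>lborel \<partial>lborel \<partial>lborel)"
  proof (rule nn_integral_cong, rule nn_integral_cong)
    fix x u :: real
    have "(\<lambda>(y,v). ennreal (H x u y v) * g (x,u,y,v)) \<in> borel_measurable (lborel \<Otimes>\<^sub>M lborel)"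
      by (rule meas_lb11) measurable
    then show "(\<integral>\<^sup>+y. \<integral>\<^sup>+v. ennreal (H x u y v) * g (x,u,y,v) \<partial>lborel \<partial>lborel) = (\<integral>\<^sup>+v. \<integral>\<^sup>+y. ennreal (H x u y v) * g (x,u,y,v) \<partial>lborel \<partial>lborel)"
      by (rule lborel_pair.Fubini'[symmetric])
  qed
  finally show ?thesis .
qed

lemma total: "(\<integral>\<^sup>+x. \<integral>\<^sup>+u. \<integral>\<^sup>+v. Hinf x u v \<partial>lborel \<partial>lborel \<partial>lborel) = 1"
proof -
  have "1 = emeasure P {z \<in> space P. (mu z, eta z, pi z, gam z) \<in> UNIV}"
    using prob_space.emeasure_space_1[OF PS] by simp
  also have "\<dots> = (\<integral>\<^sup>+w. f4 w * (\<lambda>_. 1) w \<partial>lborel)" by (subst event) simp_all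
  also have "\<dots> = (\<integral>\<^sup>+x. \<integral>\<^sup>+u. \<integral>\<^sup>+v. Hinf x u v \<partial>lborel \<partial>lborel \<partial>lborel)"
    by (subst iter) (simp_all add: Hinf_def[abs_def])
  finally show ?thesis by simp
qed


lemma F1m: "(\<lambda>x. \<integral>\<^sup>+u. \<integral>\<^sup>+v. Hinf x u v \<partial>lborel \<partial>lborel) \<in> borel_measurable lborel"
  by simp measurable
lemma F2m: "(\<lambda>u. \<integral>\<^sup>+v. Hinf x u v \<partial>lborel) \<in> borel_measurable lborel"
  by simp measurable
lemma F3m: "(\<lambda>v. Hinf x u v) \<in> borel_measurable lborel"
  by simp measurable

lemma window:
  assumes W[measurable]: "W \<in> sets borel"
  shows "emeasure P {z \<in> space P. pi z + c * gam z \<le> \<theta> \<and> mu z + c * eta z \<in> W} = (\<integral>\<^sup>+x. indicator W x * ennreal (G c \<theta> x) \<partial>lborel)"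
proof -
  define S where "S = {w::real\<times>real\<times>real\<times>real. fst (snd (snd w)) + c * snd (snd (snd w)) \<le> \<theta> \<and> fst w + c * fst (snd w) \<in> W}"
  have "{w \<in> space (borel \<Otimes>\<^sub>M (borel \<Otimes>\<^sub>M (borel \<Otimes>\<^sub>M borel))). fst (snd (snd w)) + c * snd (snd (snd w)) \<le> \<theta> \<and> fst w + c * fst (snd w) \<in> W}
     \<in> sets (borel \<Otimes>\<^sub>M (borel \<Otimes>\<^sub>M (borel \<Otimes>\<^sub>M (borel::real measure))))" by measurable
  then have Sm': "S \<in> sets (borel \<Otimes>\<^sub>M (borel \<Otimes>\<^sub>M (borel \<Otimes>\<^sub>M (borel::real measure))))"
    by (simp add: S_def space_pair_measure)
  then have Sm: "S \<in> sets borel" by (simp only: borel_prod)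
  have "{z \<in> space P. pi z + c * gam z \<le> \<theta> \<and> mu z + c * eta z \<in> W} = {z \<in> space P. (mu z, eta z, pi z, gam z) \<in> S}"
    by (auto simp: S_def)
  then have "emeasure P {z \<in> space P. pi z + c * gam z \<le> \<theta> \<and> mu z + c * eta z \<in> W}
      = (\<integral>\<^sup>+w. f4 w * indicator S w \<partial>lborel)" using event[OF Sm] by simp
  also have "\<dots> = (\<integral>\<^sup>+x. \<integral>\<^sup>+u. \<integral>\<^sup>+v. \<integral>\<^sup>+y. ennreal (H x u y v) * indicator S (x,u,y,v) \<partial>lborel \<partial>lborel \<partial>lborel \<partial>lborel)"
    by (rule iter) (use Sm' in measurable)
  also have "\<dots> = (\<integral>\<^sup>+x. \<integral>\<^sup>+u. \<integral>\<^sup>+v. indicator W (x + c * u) * KY x u (\<theta> - c * v) v \<partial>lborel \<partial>lborel \<partial>lborel)"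
  proof (rule nn_integral_cong, rule nn_integral_cong, rule nn_integral_cong)
    fix x u v :: real
    have "(\<integral>\<^sup>+y. ennreal (H x u y v) * indicator S (x,u,y,v) \<partial>lborel)
       = (\<integral>\<^sup>+y. indicator W (x + c * u) * (indicator {..\<theta> - c * v} y * ennreal (H x u y v)) \<partial>lborel)"
      by (intro nn_integral_cong) (auto simp: S_def indicator_def algebra_simps)
    also have "\<dots> = indicator W (x + c * u) * KY x u (\<theta> - c * v) v"
      unfolding KY_def by (rule nn_integral_cmult) measurable
    finally show "(\<integral>\<^sup>+y. ennreal (H x u y v) * indicator S (x,u,y,v) \<partial>lborel) = indicator W (x + c * u) * KY x u (\<theta> - c * v) v" .
  qed
  also have "\<dots> = (\<integral>\<^sup>+x. \<integral>\<^sup>+u. \<integral>\<^sup>+v. indicator W (x + c * u) * ennreal (HY x u (\<theta> - c * v) v) \<partial>lborel \<partial>lborel \<partial>lborel)"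
  proof (rule nn_zero_generic[OF F1m])
    show "(\<integral>\<^sup>+x. \<integral>\<^sup>+u. \<integral>\<^sup>+v. Hinf x u v \<partial>lborel \<partial>lborel \<partial>lborel) \<noteq> \<infinity>" using total by simp
    fix x assume "(\<integral>\<^sup>+u. \<integral>\<^sup>+v. Hinf x u v \<partial>lborel \<partial>lborel) \<noteq> \<infinity>"
    then show "(\<integral>\<^sup>+u. \<integral>\<^sup>+v. indicator W (x + c * u) * KY x u (\<theta> - c * v) v \<partial>lborel \<partial>lborel) =
      (\<integral>\<^sup>+u. \<integral>\<^sup>+v. indicator W (x + c * u) * ennreal (HY x u (\<theta> - c * v) v) \<partial>lborel \<partial>lborel)"
    proof (rule nn_zero_generic[OF F2m])
      fix u assume "(\<integral>\<^sup>+v. Hinf x u v \<partial>lborel) \<noteq> \<infinity>"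
      then show "(\<integral>\<^sup>+v. indicator W (x + c * u) * KY x u (\<theta> - c * v) v \<partial>lborel) =
        (\<integral>\<^sup>+v. indicator W (x + c * u) * ennreal (HY x u (\<theta> - c * v) v) \<partial>lborel)"
      proof (rule nn_zero_generic[OF F3m])
        fix v assume "Hinf x u v \<noteq> \<infinity>"
        then show "indicator W (x + c * u) * KY x u (\<theta> - c * v) v = indicator W (x + c * u) * ennreal (HY x u (\<theta> - c * v) v)"
          by (simp add: KY_HY)
      qed
    qed
  qed
  also have "\<dots> = (\<integral>\<^sup>+x. \<integral>\<^sup>+p. indicator W (x + c * fst p) * ennreal (HY x (fst p) (\<theta> - c * snd p) (snd p)) \<partial>lborel \<partial>lborel)"
  proof (rule nn_integral_cong)
    fix x :: real
    show "(\<integral>\<^sup>+u. \<integral>\<^sup>+v. indicator W (x + c * u) * ennreal (HY x u (\<theta> - c * v) v) \<partial>lborel \<partial>lborel) =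
      (\<integral>\<^sup>+p. indicator W (x + c * fst p) * ennreal (HY x (fst p) (\<theta> - c * snd p) (snd p)) \<partial>lborel)"
      by (subst nn_pair) (simp_all, rule pairB, measurable)
  qed
  also have "\<dots> = (\<integral>\<^sup>+p. \<integral>\<^sup>+x. indicator W (x + c * fst p) * ennreal (HY x (fst p) (\<theta> - c * snd p) (snd p)) \<partial>lborel \<partial>lborel)"
    by (rule lborel_pair.Fubini'[symmetric]) (rule meas_lb12, measurable)
  also have "\<dots> = (\<integral>\<^sup>+p. \<integral>\<^sup>+x. indicator W x * ennreal (HY (x - c * fst p) (fst p) (\<theta> - c * snd p) (snd p)) \<partial>lborel \<partial>lborel)"
  proof (rule nn_integral_cong)
    fix p :: "real \<times> real"
    show "(\<integral>\<^sup>+x. indicator W (x + c * fst p) * ennreal (HY x (fst p) (\<theta> - c * snd p) (snd p)) \<partial>lborel) =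
      (\<integral>\<^sup>+x. indicator W x * ennreal (HY (x - c * fst p) (fst p) (\<theta> - c * snd p) (snd p)) \<partial>lborel)"
      by (subst nn_integral_real_affine[where c=1 and t="- c * fst p"]) (simp_all, measurable)
  qed
  also have "\<dots> = (\<integral>\<^sup>+x. \<integral>\<^sup>+p. indicator W x * ennreal (HY (x - c * fst p) (fst p) (\<theta> - c * snd p) (snd p)) \<partial>lborel \<partial>lborel)"
    by (rule lborel_pair.Fubini') (rule meas_lb12, measurable)
  also have "\<dots> = (\<integral>\<^sup>+x. indicator W x * ennreal (G c \<theta> x) \<partial>lborel)"
  proof (rule nn_integral_cong)
    fix x :: real
    have "(\<integral>\<^sup>+p. indicator W x * ennreal (HY (x - c * fst p) (fst p) (\<theta> - c * snd p) (snd p)) \<partial>lborel)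
      = indicator W x * (\<integral>\<^sup>+p. ennreal (HY (x - c * fst p) (fst p) (\<theta> - c * snd p) (snd p)) \<partial>lborel)"
      by (rule nn_integral_cmult) (simp, rule pairB, measurable)
    also have "\<dots> = indicator W x * ennreal (G c \<theta> x)"
      unfolding G_def by (subst nn_integral_eq_integral[OF G_int]) (simp_all add: HY_nn)
    finally show "(\<integral>\<^sup>+p. indicator W x * ennreal (HY (x - c * fst p) (fst p) (\<theta> - c * snd p) (snd p)) \<partial>lborel)
      = indicator W x * ennreal (G c \<theta> x)" .
  qed
  finally show ?thesis .
qed


lemma fmP: "finite_measure P" using PS by (simp add: prob_space_def)

lemma comp_meas[measurable]: "mu \<in> borel_measurable P" "eta \<in> borel_measurable P" "pi \<in> borel_measurable P" "gam \<in> borel_measurable P"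
proof -
  have X': "(\<lambda>z. (mu z, eta z, pi z, gam z)) \<in> P \<rightarrow>\<^sub>M (borel \<Otimes>\<^sub>M (borel \<Otimes>\<^sub>M (borel \<Otimes>\<^sub>M borel)))"
    using Xm by (simp add: borel_prod)
  show "mu \<in> borel_measurable P" using measurable_compose[OF X' measurable_fst] by simp
  show "eta \<in> borel_measurable P" using measurable_compose[OF measurable_compose[OF X' measurable_snd] measurable_fst] by simp
  show "pi \<in> borel_measurable P" using measurable_compose[OF measurable_compose[OF measurable_compose[OF X' measurable_snd] measurable_snd] measurable_fst] by simp
  show "gam \<in> borel_measurable P" using measurable_compose[OF measurable_compose[OF measurable_compose[OF X' measurable_snd] measurable_snd] measurable_snd] by simp
qed

definition "Nm c \<theta> q e = measure P {z \<in> space P. pi z + c * gam z \<le> \<theta> \<and> \<bar>mu z + c * eta z - q\<bar> \<le> e}"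
definition "Dm c q e = measure P {z \<in> space P. \<bar>mu z + c * eta z - q\<bar> \<le> e}"

lemma win_bound:
  assumes e: "e > 0"
  shows "\<bar>Nm c \<theta> q e - 2 * e * G c \<theta> q\<bar> \<le> 2 * L * e * e"
proof -
  define W where "W = {q - e..q + e}"
  have Wm: "W \<in> sets borel" unfolding W_def by simp
  have "{z \<in> space P. pi z + c * gam z \<le> \<theta> \<and> \<bar>mu z + c * eta z - q\<bar> \<le> e}
     = {z \<in> space P. pi z + c * gam z \<le> \<theta> \<and> mu z + c * eta z \<in> W}"
    unfolding W_def by (auto simp: abs_le_iff)
  then have eq: "ennreal (Nm c \<theta> q e) = (\<integral>\<^sup>+x. indicator W x * ennreal (G c \<theta> x) \<partial>lborel)"
    unfolding Nm_def using window[OF Wm, of c \<theta>] finite_measure.emeasure_eq_measure[OF fmP] by simp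
  have pt: "G c \<theta> q - L * e \<le> G c \<theta> x \<and> G c \<theta> x \<le> G c \<theta> q + L * e" if "x \<in> W" for x
  proof -
    have "\<bar>x - q\<bar> \<le> e" using that unfolding W_def by auto
    then have "L * \<bar>x - q\<bar> \<le> L * e" using L_nn by (simp add: mult_left_mono)
    then show ?thesis using G_xlip[of c \<theta> x q] by (simp add: abs_le_iff)
  qed
  have mW: "emeasure lborel W = ennreal (2 * e)" unfolding W_def using e by simp
  have "(\<integral>\<^sup>+x. indicator W x * ennreal (G c \<theta> x) \<partial>lborel) \<le> (\<integral>\<^sup>+x. ennreal (G c \<theta> q + L * e) * indicator W x \<partial>lborel)"
    by (intro nn_integral_mono) (auto simp: indicator_def pt intro: ennreal_leI)
  also have "\<dots> = ennreal ((G c \<theta> q + L * e) * (2 * e))"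
    using Wm mW e G_nn L_nn by (simp add: nn_integral_cmult_indicator ennreal_mult)
  finally have up0: "ennreal (Nm c \<theta> q e) \<le> ennreal ((G c \<theta> q + L * e) * (2 * e))"
    using eq by simp
  have "0 \<le> (G c \<theta> q + L * e) * (2 * e)" using e G_nn[of c \<theta> q] L_nn by simp
  then have up: "Nm c \<theta> q e \<le> (G c \<theta> q + L * e) * (2 * e)" using up0 by simp
  have lo: "(G c \<theta> q - L * e) * (2 * e) \<le> Nm c \<theta> q e"
  proof (cases "G c \<theta> q - L * e \<le> 0")
    case True
    then have "(G c \<theta> q - L * e) * (2 * e) \<le> 0" using e by (simp add: mult_nonpos_nonneg)
    also have "0 \<le> Nm c \<theta> q e" unfolding Nm_def by simp
    finally show ?thesis .
  next
    case False
    have "ennreal ((G c \<theta> q - L * e) * (2 * e)) = (\<integral>\<^sup>+x. ennreal (G c \<theta> q - L * e) * indicator W x \<partial>lborel)"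
      using Wm mW e False by (simp add: nn_integral_cmult_indicator ennreal_mult)
    also have "\<dots> \<le> (\<integral>\<^sup>+x. indicator W x * ennreal (G c \<theta> x) \<partial>lborel)"
      by (intro nn_integral_mono) (auto simp: indicator_def pt intro: ennreal_leI)
    finally have "ennreal ((G c \<theta> q - L * e) * (2 * e)) \<le> ennreal (Nm c \<theta> q e)" using eq by simp
    moreover have "0 \<le> Nm c \<theta> q e" unfolding Nm_def by simp
    ultimately show ?thesis by simp
  qed
  show ?thesis using up lo by (simp add: abs_le_iff algebra_simps)
qed

definition "S c q = (SUP k::nat. G c (real k) q)"

lemma S_bdd: "bdd_above (range (\<lambda>k::nat. G c (real k) q))"
  using G_le by (intro bdd_aboveI[of _ IB0]) auto

lemma G_le_S: "G c (real k) q \<le> S c q"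
  unfolding S_def using S_bdd by (intro cSUP_upper) auto

lemma Dm_lim: "(\<lambda>k::nat. Nm c (real k) q e) \<longlonglongrightarrow> Dm c q e"
proof -
  define A where "A k = {z \<in> space P. pi z + c * gam z \<le> real k \<and> \<bar>mu z + c * eta z - q\<bar> \<le> e}" for k :: nat
  have "A k \<in> sets P" for k unfolding A_def by measurable
  then have "range A \<subseteq> sets P" by auto
  moreover have "incseq A" unfolding A_def incseq_def
    by auto
  ultimately have "(\<lambda>k. measure P (A k)) \<longlonglongrightarrow> measure P (\<Union>k. A k)"
    by (rule finite_measure.finite_Lim_measure_incseq[OF fmP])
  moreover have "(\<Union>k. A k) = {z \<in> space P. \<bar>mu z + c * eta z - q\<bar> \<le> e}"
    unfolding A_def by (auto intro: real_arch_simple)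
  ultimately show ?thesis unfolding Nm_def Dm_def A_def by simp
qed


lemma Nm_le_Dm: "Nm c \<theta> q e \<le> Dm c q e"
  unfolding Nm_def Dm_def
  by (rule finite_measure.finite_measure_mono[OF fmP]) (auto, measurable)

lemma Dm_bound:
  assumes e: "e > 0"
  shows "\<bar>Dm c q e - 2 * e * S c q\<bar> \<le> 2 * L * e * e"
proof -
  have "Nm c (real k) q e \<le> 2 * e * S c q + 2 * L * e * e" for k
  proof -
    have "Nm c (real k) q e \<le> 2 * e * G c (real k) q + 2 * L * e * e"
      using win_bound[OF e, of c "real k" q] by (simp add: abs_le_iff)
    also have "\<dots> \<le> 2 * e * S c q + 2 * L * e * e"
      using G_le_S[of c k q] e by simp
    finally show ?thesis .
  qed
  then have up: "Dm c q e \<le> 2 * e * S c q + 2 * L * e * e"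
    by (intro LIMSEQ_le_const2[OF Dm_lim]) auto
  have "G c (real k) q \<le> (Dm c q e + 2 * L * e * e) / (2 * e)" for k
  proof -
    have "2 * e * G c (real k) q \<le> Nm c (real k) q e + 2 * L * e * e"
      using win_bound[OF e, of c "real k" q] by (simp add: abs_le_iff)
    also have "\<dots> \<le> Dm c q e + 2 * L * e * e" using Nm_le_Dm by simp
    finally show ?thesis using e by (simp add: field_simps)
  qed
  then have "S c q \<le> (Dm c q e + 2 * L * e * e) / (2 * e)"
    unfolding S_def by (intro cSUP_least) auto
  then have lo: "2 * e * S c q \<le> Dm c q e + 2 * L * e * e" using e by (simp add: field_simps)
  show ?thesis using up lo by (simp add: abs_le_iff)
qed

lemma N_lim: "((\<lambda>e. Nm c \<theta> q e / (2 * e)) \<longlongrightarrow> G c \<theta> q) (at_right 0)"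
proof (rule lim_by_bound[where C=L])
  fix e :: real assume e: "e > 0"
  have "\<bar>Nm c \<theta> q e / (2 * e) - G c \<theta> q\<bar> = \<bar>Nm c \<theta> q e - 2 * e * G c \<theta> q\<bar> / (2 * e)"
    using e by (simp add: field_simps abs_div)
  also have "\<dots> \<le> (2 * L * e * e) / (2 * e)"
    using win_bound[OF e] e by (intro divide_right_mono) auto
  also have "\<dots> = L * e" using e by simp
  finally show "\<bar>Nm c \<theta> q e / (2 * e) - G c \<theta> q\<bar> \<le> L * e" .
qed

lemma D_lim: "((\<lambda>e. Dm c q e / (2 * e)) \<longlongrightarrow> S c q) (at_right 0)"
proof (rule lim_by_bound[where C=L])
  fix e :: real assume e: "e > 0"
  have "\<bar>Dm c q e / (2 * e) - S c q\<bar> = \<bar>Dm c q e - 2 * e * S c q\<bar> / (2 * e)"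
    using e by (simp add: field_simps abs_div)
  also have "\<dots> \<le> (2 * L * e * e) / (2 * e)"
    using Dm_bound[OF e] e by (intro divide_right_mono) auto
  also have "\<dots> = L * e" using e by simp
  finally show "\<bar>Dm c q e / (2 * e) - S c q\<bar> \<le> L * e" .
qed

lemma cond_eq:
  assumes "S c q \<noteq> 0"
  shows "cond_prob_at P (\<lambda>z. mu z + c * eta z) (\<lambda>z. pi z + c * gam z) q \<theta> = G c \<theta> q / S c q"
proof -
  have "((\<lambda>e. (Nm c \<theta> q e / (2 * e)) / (Dm c q e / (2 * e))) \<longlongrightarrow> G c \<theta> q / S c q) (at_right 0)"
    by (rule tendsto_divide[OF N_lim D_lim assms])
  moreover have "eventually (\<lambda>e. (Nm c \<theta> q e / (2 * e)) / (Dm c q e / (2 * e)) = Nm c \<theta> q e / Dm c q e) (at_right 0)"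
    unfolding eventually_at_right_field by (intro exI[of _ 1]) auto
  ultimately have "((\<lambda>e. Nm c \<theta> q e / Dm c q e) \<longlongrightarrow> G c \<theta> q / S c q) (at_right 0)"
    by (rule Lim_transform_eventually)
  then have "Lim (at_right 0) (\<lambda>e. Nm c \<theta> q e / Dm c q e) = G c \<theta> q / S c q"
    by (intro tendsto_Lim) auto
  then show ?thesis unfolding cond_prob_at_def Nm_def Dm_def by simp
qed

lemma S_nn: "0 \<le> S c q" using G_nn[of c 0 q] G_le_S[of c 0 q] by simp

lemma S_le: "S c q \<le> IB0" unfolding S_def using G_le by (intro cSUP_least) auto

lemma K_nn: "0 \<le> K" unfolding K_def by (rule integral_nonneg_AE) (simp add: B0_nn BY1_nn)

lemma S_cdiff: "\<bar>S c q - S 0 q\<bar> \<le> \<bar>c\<bar> * K"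
proof -
  have "S c q \<le> S 0 q + \<bar>c\<bar> * K"
    unfolding S_def[of c]
  proof (rule cSUP_least)
    fix k :: nat
    have "G c (real k) q \<le> G 0 (real k) q + \<bar>c\<bar> * K" using G_cdiff[of c "real k" q] by (simp add: abs_le_iff)
    also have "\<dots> \<le> S 0 q + \<bar>c\<bar> * K" using G_le_S[of 0 k q] by simp
    finally show "G c (real k) q \<le> S 0 q + \<bar>c\<bar> * K" .
  qed auto
  moreover have "S 0 q \<le> S c q + \<bar>c\<bar> * K"
    unfolding S_def[of 0]
  proof (rule cSUP_least)
    fix k :: nat
    have "G 0 (real k) q \<le> G c (real k) q + \<bar>c\<bar> * K" using G_cdiff[of c "real k" q] by (simp add: abs_le_iff)
    also have "\<dots> \<le> S c q + \<bar>c\<bar> * K" using G_le_S[of c k q] by simp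
    finally show "G 0 (real k) q \<le> S c q + \<bar>c\<bar> * K" .
  qed auto
  ultimately show ?thesis by (simp add: abs_le_iff)
qed


lemma main_step:
  assumes f0: "f0 > 0"
    and dq: "((\<lambda>e. measure P {z \<in> space P. \<bar>mu z - q\<bar> \<le> e} / (2 * e)) \<longlongrightarrow> f0) (at_right 0)"
    and Kb: "K \<le> Kb" and Bd: "IB0 \<le> Bd" and c: "0 < c" "c * Kb \<le> f0 / 2"
  shows "\<bar>cond_prob_at P (\<lambda>z. mu z + c * eta z) (\<lambda>z. pi z + c * gam z) q \<theta> - cond_prob_at P mu pi q \<theta>\<bar>
          \<le> c * Kb * (2 / f0 + 2 * Bd / (f0 * f0))"
proof -
  have "((\<lambda>e. Dm 0 q e / (2 * e)) \<longlongrightarrow> f0) (at_right 0)" using dq unfolding Dm_def by simp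
  then have S0: "S 0 q = f0" using D_lim[of 0 q] by (intro tendsto_unique[of "at_right 0"]) auto
  have c0: "cond_prob_at P mu pi q \<theta> = G 0 \<theta> q / S 0 q"
    using cond_eq[of 0 q \<theta>] S0 f0 by simp
  have S1: "\<bar>S c q - S 0 q\<bar> \<le> c * Kb" using S_cdiff[of c q] K_nn Kb c by (simp add: order_trans mult_left_mono)
  have G1: "\<bar>G c \<theta> q - G 0 \<theta> q\<bar> \<le> c * Kb" using G_cdiff[of c \<theta> q] K_nn Kb c by (simp add: order_trans mult_left_mono)
  have "S c q \<noteq> 0" using S1 S0 c f0 by (auto simp: abs_le_iff)
  then have c1: "cond_prob_at P (\<lambda>z. mu z + c * eta z) (\<lambda>z. pi z + c * gam z) q \<theta> = G c \<theta> q / S c q"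
    by (rule cond_eq)
  show ?thesis unfolding c0 c1
    by (rule ratio_bound[OF f0 S0 S1 c(2) G_nn order_trans[OF G_le Bd] G1])
qed


lemma K_le: "K \<le> (\<integral>p. (1 + \<bar>fst p\<bar> + \<bar>snd p\<bar>) * BY1 (fst p) (snd p) \<partial>lborel) + (\<integral>p. (1 + \<bar>fst p\<bar> + \<bar>snd p\<bar>) * B0 (fst p) (snd p) \<partial>lborel)"
proof -
  have i1: "integrable lborel (\<lambda>p. (1 + \<bar>fst p\<bar> + \<bar>snd p\<bar>) * BY1 (fst p) (snd p))" using BY1i by (simp add: case_prod_beta')
  have i0: "integrable lborel (\<lambda>p. (1 + \<bar>fst p\<bar> + \<bar>snd p\<bar>) * B0 (fst p) (snd p))" using B0i by (simp add: case_prod_beta')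
  have "K \<le> (\<integral>p. (1 + \<bar>fst p\<bar> + \<bar>snd p\<bar>) * BY1 (fst p) (snd p) + (1 + \<bar>fst p\<bar> + \<bar>snd p\<bar>) * B0 (fst p) (snd p) \<partial>lborel)"
    unfolding K_def
  proof (rule Bochner_Integration.integral_mono)
    show "integrable lborel (\<lambda>p. \<bar>fst p\<bar> * BY1 (fst p) (snd p) + \<bar>snd p\<bar> * B0 (fst p) (snd p))"
      using BY1w(2) B0w(3) by simp
    show "integrable lborel (\<lambda>p. (1 + \<bar>fst p\<bar> + \<bar>snd p\<bar>) * BY1 (fst p) (snd p) + (1 + \<bar>fst p\<bar> + \<bar>snd p\<bar>) * B0 (fst p) (snd p))"
      using i1 i0 by simp
    fix p :: "real \<times> real"
    have "0 \<le> BY1 (fst p) (snd p)" "0 \<le> B0 (fst p) (snd p)" by (simp_all add: BY1_nn B0_nn)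
    then show "\<bar>fst p\<bar> * BY1 (fst p) (snd p) + \<bar>snd p\<bar> * B0 (fst p) (snd p) \<le> (1 + \<bar>fst p\<bar> + \<bar>snd p\<bar>) * BY1 (fst p) (snd p) + (1 + \<bar>fst p\<bar> + \<bar>snd p\<bar>) * B0 (fst p) (snd p)"
      by (intro add_mono mult_right_mono) auto
  qed
  also have "\<dots> = (\<integral>p. (1 + \<bar>fst p\<bar> + \<bar>snd p\<bar>) * BY1 (fst p) (snd p) \<partial>lborel) + (\<integral>p. (1 + \<bar>fst p\<bar> + \<bar>snd p\<bar>) * B0 (fst p) (snd p) \<partial>lborel)"
    by (rule Bochner_Integration.integral_add[OF i1 i0])
  finally show ?thesis .
qed

lemma IB0_le: "IB0 \<le> (\<integral>p. (1 + \<bar>fst p\<bar> + \<bar>snd p\<bar>) * BY0 (fst p) (snd p) \<partial>lborel)"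
  unfolding IB0_def
proof (rule Bochner_Integration.integral_mono)
  show "integrable lborel (\<lambda>p. (1 + \<bar>fst p\<bar> + \<bar>snd p\<bar>) * BY0 (fst p) (snd p))" using BY0i by (simp add: case_prod_beta')
  show "integrable lborel (\<lambda>p. BY0 (fst p) (snd p))" by (rule BY0w(1))
  fix p :: "real \<times> real"
  have "0 \<le> (\<bar>fst p\<bar> + \<bar>snd p\<bar>) * BY0 (fst p) (snd p)" by (simp add: BY0_nn)
  then show "BY0 (fst p) (snd p) \<le> (1 + \<bar>fst p\<bar> + \<bar>snd p\<bar>) * BY0 (fst p) (snd p)" by (simp add: distrib_right)
qed

end

lemma int_from_nn:
  fixes B :: "real \<Rightarrow> real \<Rightarrow> real"
  assumes nn: "\<forall>u v. 0 \<le> B u v" and m: "(\<lambda>(u,v). B u v) \<in> borel_measurable lborel"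
    and le: "(\<integral>\<^sup>+(u,v). ennreal ((1 + \<bar>u\<bar> + \<bar>v\<bar>) ^ 1 * B u v) \<partial>lborel) \<le> ennreal C"
  shows "integrable lborel (\<lambda>(u,v). (1 + \<bar>u\<bar> + \<bar>v\<bar>) * B u v)"
    "(\<integral>p. (1 + \<bar>fst p\<bar> + \<bar>snd p\<bar>) * B (fst p) (snd p) \<partial>lborel) \<le> max C 0"
proof -
  have m'[measurable]: "(\<lambda>p. B (fst p) (snd p)) \<in> borel_measurable (borel \<Otimes>\<^sub>M borel)"
    using m by (simp add: case_prod_beta' borel_prod)
  have gm: "(\<lambda>p::real\<times>real. (1 + \<bar>fst p\<bar> + \<bar>snd p\<bar>) * B (fst p) (snd p)) \<in> borel_measurable lborel"
    by (simp only: measurable_lborel2, rule pairB, measurable)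
  have nn': "0 \<le> (1 + \<bar>fst p\<bar> + \<bar>snd p\<bar>) * B (fst p) (snd p)" for p :: "real \<times> real" using nn by simp
  have le': "(\<integral>\<^sup>+p. ennreal ((1 + \<bar>fst p\<bar> + \<bar>snd p\<bar>) * B (fst p) (snd p)) \<partial>lborel) \<le> ennreal (max C 0)"
    using le order_trans[OF _ ennreal_leI[of C "max C 0"]] by (simp add: case_prod_beta')
  have int: "integrable lborel (\<lambda>p::real\<times>real. (1 + \<bar>fst p\<bar> + \<bar>snd p\<bar>) * B (fst p) (snd p))"
  proof (rule integrableI_bounded[OF gm])
    have "(\<integral>\<^sup>+p. ennreal (norm ((1 + \<bar>fst p\<bar> + \<bar>snd p\<bar>) * B (fst p) (snd p))) \<partial>lborel)
       = (\<integral>\<^sup>+p. ennreal ((1 + \<bar>fst p\<bar> + \<bar>snd p\<bar>) * B (fst p) (snd p)) \<partial>lborel)"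
      using nn' by (intro nn_integral_cong) simp
    also have "\<dots> < \<infinity>" using le' by (simp add: le_less_trans)
    finally show "(\<integral>\<^sup>+p. ennreal (norm ((1 + \<bar>fst p\<bar> + \<bar>snd p\<bar>) * B (fst p) (snd p))) \<partial>lborel) < \<infinity>" .
  qed
  then show "integrable lborel (\<lambda>(u,v). (1 + \<bar>u\<bar> + \<bar>v\<bar>) * B u v)" by (simp add: case_prod_beta')
  have "(\<integral>p. (1 + \<bar>fst p\<bar> + \<bar>snd p\<bar>) * B (fst p) (snd p) \<partial>lborel)
      = enn2real (\<integral>\<^sup>+p. ennreal ((1 + \<bar>fst p\<bar> + \<bar>snd p\<bar>) * B (fst p) (snd p)) \<partial>lborel)"
    by (rule integral_eq_nn_integral[OF gm]) (simp add: nn')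
  also have "\<dots> \<le> enn2real (ennreal (max C 0))"
    by (rule enn2real_mono[OF le']) simp
  also have "\<dots> = max C 0" by (cases "0 \<le> C") (simp_all add: ennreal_neg)
  finally show "(\<integral>p. (1 + \<bar>fst p\<bar> + \<bar>snd p\<bar>) * B (fst p) (snd p) \<partial>lborel) \<le> max C 0" .
qed

theorem lemma4:
  fixes P :: "(real^'d) measure" and Q :: "'w measure"
    and \<mu> \<pi> :: "real^'d \<Rightarrow> real"
    and \<mu>t \<pi>t :: "nat \<Rightarrow> 'w \<Rightarrow> real^'d \<Rightarrow> real"
    and \<alpha> \<beta> q \<theta> :: real and a :: "nat \<Rightarrow> real"
    and h :: "nat \<Rightarrow> 'w \<Rightarrow> real \<Rightarrow> real \<Rightarrow> real \<Rightarrow> real \<Rightarrow> real"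
    and hb0 hb1 hb2 hbY0 hbY1 hbY2 hbX0 hbX1 :: "nat \<Rightarrow> real \<Rightarrow> real \<Rightarrow> real"
  assumes P: "prob_space P" "sets P = sets borel"
    and Q: "prob_space Q"
    and meas: "\<mu> \<in> borel_measurable P" "\<pi> \<in> borel_measurable P"
      "\<And>m \<omega>. \<mu>t m \<omega> \<in> borel_measurable P" "\<And>m \<omega>. \<pi>t m \<omega> \<in> borel_measurable P"
    and \<alpha>: "0 < \<alpha>" "\<alpha> < 1" and \<beta>: "0 < \<beta>" "\<beta> < 1"
    and q: "measure P {z \<in> space P. \<mu> z \<le> q} = \<alpha>"
    and dens_q: "\<exists>f0>0. ((\<lambda>\<epsilon>. measure P {z \<in> space P. \<bar>\<mu> z - q\<bar> \<le> \<epsilon>} / (2 * \<epsilon>)) \<longlongrightarrow> f0) (at_right 0)"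
    and \<theta>: "cond_prob_at P \<mu> \<pi> q \<theta> = \<beta>"
    \<comment> \<open>Assumption (A)\<close>
    and a_pos: "\<forall>\<^sub>F m in sequentially. a m > 0"
    and a_lim: "a \<longlonglongrightarrow> 0"
    and A_mu: "bigO_P Q (\<lambda>m \<omega>. ess_norm P (\<lambda>z. \<mu>t m \<omega> z - \<mu> z)) a"
    and A_pi: "bigO_P Q (\<lambda>m \<omega>. ess_norm P (\<lambda>z. \<pi>t m \<omega> z - \<pi> z)) a"
    \<comment> \<open>(R3)\<close>
    and R3_dens: "\<forall>\<^sub>F m in sequentially. \<forall>\<omega>\<in>space Q.
        distributed P lborel
          (\<lambda>z. (\<mu> z, (\<mu>t m \<omega> z - \<mu> z) / a m, \<pi> z, (\<pi>t m \<omega> z - \<pi> z) / a m))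
          (\<lambda>(x, u, y, v). ennreal (h m \<omega> x u y v))
        \<and> (\<forall>x u y v. 0 \<le> h m \<omega> x u y v)"
    and R3_diff: "\<forall>\<^sub>F m in sequentially. \<forall>\<omega>\<in>space Q. \<forall>x u y v.
        (\<lambda>x'. h m \<omega> x' u y v) differentiable at x
      \<and> (\<lambda>y'. h m \<omega> x u y' v) differentiable at y
      \<and> (\<lambda>x'. LINT t:{..y}|lborel. h m \<omega> x' u t v) differentiable at x
      \<and> (\<lambda>x'. deriv (\<lambda>x''. LINT t:{..y}|lborel. h m \<omega> x'' u t v) x') differentiable at x"
    and R3_bnd: "\<forall>\<^sub>F m in sequentially. \<forall>\<omega>\<in>space Q. \<forall>x u y v.
        h m \<omega> x u y v \<le> hb0 m u v
      \<and> \<bar>deriv (\<lambda>x'. h m \<omega> x' u y v) x\<bar> \<le> hb1 m u v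
      \<and> \<bar>deriv (\<lambda>y'. h m \<omega> x u y' v) y\<bar> \<le> hb2 m u v
      \<and> (LINT t:{..y}|lborel. h m \<omega> x u t v) \<le> hbY0 m u v
      \<and> \<bar>deriv (\<lambda>x'. LINT t:{..y}|lborel. h m \<omega> x' u t v) x\<bar> \<le> hbY1 m u v
      \<and> \<bar>deriv (deriv (\<lambda>x'. LINT t:{..y}|lborel. h m \<omega> x' u t v)) x\<bar> \<le> hbY2 m u v"
    and R3_int: "\<And>hb. hb \<in> {hb0, hb1, hb2, hbY0, hbY1, hbY2} \<Longrightarrow>
        (\<forall>m u v. 0 \<le> hb m u v) \<and> (\<forall>m. (\<lambda>(u, v). hb m u v) \<in> borel_measurable lborel)
      \<and> (\<forall>r\<in>{1::nat, 2}. \<exists>C::real. \<forall>m.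
           (\<integral>\<^sup>+ (u, v). ennreal ((1 + \<bar>u\<bar> + \<bar>v\<bar>) ^ r * hb m u v) \<partial>lborel) \<le> ennreal C)"
    \<comment> \<open>(R4)\<close>
    and R4_diff: "\<forall>\<^sub>F m in sequentially. \<forall>\<omega>\<in>space Q. \<forall>x u y v.
        (\<lambda>y'. LINT s:{..x}|lborel. h m \<omega> s u y' v) differentiable at y"
    and R4_bnd: "\<forall>\<^sub>F m in sequentially. \<forall>\<omega>\<in>space Q. \<forall>x u y v.
        (LINT s:{..x}|lborel. h m \<omega> s u y v) \<le> hbX0 m u v
      \<and> \<bar>deriv (\<lambda>y'. LINT s:{..x}|lborel. h m \<omega> s u y' v) y\<bar> \<le> hbX1 m u v"
    and R4_int: "\<And>hb. hb \<in> {hbX0, hbX1} \<Longrightarrow>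
        (\<forall>m u v. 0 \<le> hb m u v) \<and> (\<forall>m. (\<lambda>(u, v). hb m u v) \<in> borel_measurable lborel)
      \<and> (\<exists>C::real. \<forall>m.
           (\<integral>\<^sup>+ (u, v). ennreal ((1 + \<bar>u\<bar> + \<bar>v\<bar>) * hb m u v) \<partial>lborel) \<le> ennreal C)"
  shows "bigO_P Q (\<lambda>m \<omega>. ereal (cond_prob_at P (\<mu>t m \<omega>) (\<pi>t m \<omega>) q \<theta>
                                   - cond_prob_at P \<mu> \<pi> q \<theta>)) a"
proof -
  obtain f0 where f0: "f0 > 0"
    and dq: "((\<lambda>\<epsilon>. measure P {z \<in> space P. \<bar>\<mu> z - q\<bar> \<le> \<epsilon>} / (2 * \<epsilon>)) \<longlongrightarrow> f0) (at_right 0)"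
    using dens_q by blast
  have I0: "(\<forall>m u v. 0 \<le> hb0 m u v) \<and> (\<forall>m. (\<lambda>(u, v). hb0 m u v) \<in> borel_measurable lborel)
      \<and> (\<forall>r\<in>{1::nat, 2}. \<exists>C::real. \<forall>m. (\<integral>\<^sup>+ (u, v). ennreal ((1 + \<bar>u\<bar> + \<bar>v\<bar>) ^ r * hb0 m u v) \<partial>lborel) \<le> ennreal C)"
    by (rule R3_int) simp
  have IY0: "(\<forall>m u v. 0 \<le> hbY0 m u v) \<and> (\<forall>m. (\<lambda>(u, v). hbY0 m u v) \<in> borel_measurable lborel)
      \<and> (\<forall>r\<in>{1::nat, 2}. \<exists>C::real. \<forall>m. (\<integral>\<^sup>+ (u, v). ennreal ((1 + \<bar>u\<bar> + \<bar>v\<bar>) ^ r * hbY0 m u v) \<partial>lborel) \<le> ennreal C)"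
    by (rule R3_int) simp
  have IY1: "(\<forall>m u v. 0 \<le> hbY1 m u v) \<and> (\<forall>m. (\<lambda>(u, v). hbY1 m u v) \<in> borel_measurable lborel)
      \<and> (\<forall>r\<in>{1::nat, 2}. \<exists>C::real. \<forall>m. (\<integral>\<^sup>+ (u, v). ennreal ((1 + \<bar>u\<bar> + \<bar>v\<bar>) ^ r * hbY1 m u v) \<partial>lborel) \<le> ennreal C)"
    by (rule R3_int) simp
  obtain C0 where C0: "\<And>m. (\<integral>\<^sup>+ (u, v). ennreal ((1 + \<bar>u\<bar> + \<bar>v\<bar>) ^ 1 * hb0 m u v) \<partial>lborel) \<le> ennreal C0"
    using I0 by blast
  obtain CY0 where CY0: "\<And>m. (\<integral>\<^sup>+ (u, v). ennreal ((1 + \<bar>u\<bar> + \<bar>v\<bar>) ^ 1 * hbY0 m u v) \<partial>lborel) \<le> ennreal CY0"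
    using IY0 by blast
  obtain CY1 where CY1: "\<And>m. (\<integral>\<^sup>+ (u, v). ennreal ((1 + \<bar>u\<bar> + \<bar>v\<bar>) ^ 1 * hbY1 m u v) \<partial>lborel) \<le> ennreal CY1"
    using IY1 by blast
  have i0: "integrable lborel (\<lambda>(u,v). (1 + \<bar>u\<bar> + \<bar>v\<bar>) * hb0 m u v)"
      "(\<integral>p. (1 + \<bar>fst p\<bar> + \<bar>snd p\<bar>) * hb0 m (fst p) (snd p) \<partial>lborel) \<le> max C0 0" for m
  proof -
    have a: "\<forall>u v. 0 \<le> hb0 m u v" using I0 by blast
    have b: "(\<lambda>(u,v). hb0 m u v) \<in> borel_measurable lborel" using I0 by blast
    show "integrable lborel (\<lambda>(u,v). (1 + \<bar>u\<bar> + \<bar>v\<bar>) * hb0 m u v)"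
      "(\<integral>p. (1 + \<bar>fst p\<bar> + \<bar>snd p\<bar>) * hb0 m (fst p) (snd p) \<partial>lborel) \<le> max C0 0"
      using int_from_nn[OF a b C0] by simp_all
  qed
  have iY0: "integrable lborel (\<lambda>(u,v). (1 + \<bar>u\<bar> + \<bar>v\<bar>) * hbY0 m u v)"
      "(\<integral>p. (1 + \<bar>fst p\<bar> + \<bar>snd p\<bar>) * hbY0 m (fst p) (snd p) \<partial>lborel) \<le> max CY0 0" for m
  proof -
    have a: "\<forall>u v. 0 \<le> hbY0 m u v" using IY0 by blast
    have b: "(\<lambda>(u,v). hbY0 m u v) \<in> borel_measurable lborel" using IY0 by blast
    show "integrable lborel (\<lambda>(u,v). (1 + \<bar>u\<bar> + \<bar>v\<bar>) * hbY0 m u v)"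
      "(\<integral>p. (1 + \<bar>fst p\<bar> + \<bar>snd p\<bar>) * hbY0 m (fst p) (snd p) \<partial>lborel) \<le> max CY0 0"
      using int_from_nn[OF a b CY0] by simp_all
  qed
  have iY1: "integrable lborel (\<lambda>(u,v). (1 + \<bar>u\<bar> + \<bar>v\<bar>) * hbY1 m u v)"
      "(\<integral>p. (1 + \<bar>fst p\<bar> + \<bar>snd p\<bar>) * hbY1 m (fst p) (snd p) \<partial>lborel) \<le> max CY1 0" for m
  proof -
    have a: "\<forall>u v. 0 \<le> hbY1 m u v" using IY1 by blast
    have b: "(\<lambda>(u,v). hbY1 m u v) \<in> borel_measurable lborel" using IY1 by blast
    show "integrable lborel (\<lambda>(u,v). (1 + \<bar>u\<bar> + \<bar>v\<bar>) * hbY1 m u v)"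
      "(\<integral>p. (1 + \<bar>fst p\<bar> + \<bar>snd p\<bar>) * hbY1 m (fst p) (snd p) \<partial>lborel) \<le> max CY1 0"
      using int_from_nn[OF a b CY1] by simp_all
  qed
  define Kb where "Kb = max CY1 0 + max C0 0"
  define Bd where "Bd = max CY0 0"
  define Cf where "Cf = Kb * (2 / f0 + 2 * Bd / (f0 * f0))"
  have "((\<lambda>m. a m * Kb) \<longlongrightarrow> 0 * Kb) sequentially" by (intro tendsto_intros a_lim)
  then have ev_small: "\<forall>\<^sub>F m in sequentially. a m * Kb < f0 / 2"
    using f0 by (intro order_tendstoD(2)) auto
  have ev: "\<forall>\<^sub>F m in sequentially. a m > 0 \<and> a m * Kb < f0 / 2 \<and> (\<forall>\<omega>\<in>space Q.
        distributed P lborel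
          (\<lambda>z. (\<mu> z, (\<mu>t m \<omega> z - \<mu> z) / a m, \<pi> z, (\<pi>t m \<omega> z - \<pi> z) / a m))
          (\<lambda>(x, u, y, v). ennreal (h m \<omega> x u y v))
        \<and> (\<forall>x u y v. 0 \<le> h m \<omega> x u y v))
     \<and> (\<forall>\<omega>\<in>space Q. \<forall>x u y v.
        (\<lambda>x'. h m \<omega> x' u y v) differentiable at x
      \<and> (\<lambda>y'. h m \<omega> x u y' v) differentiable at y
      \<and> (\<lambda>x'. LINT t:{..y}|lborel. h m \<omega> x' u t v) differentiable at x
      \<and> (\<lambda>x'. deriv (\<lambda>x''. LINT t:{..y}|lborel. h m \<omega> x'' u t v) x') differentiable at x)
     \<and> (\<forall>\<omega>\<in>space Q. \<forall>x u y v.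
        h m \<omega> x u y v \<le> hb0 m u v
      \<and> \<bar>deriv (\<lambda>x'. h m \<omega> x' u y v) x\<bar> \<le> hb1 m u v
      \<and> \<bar>deriv (\<lambda>y'. h m \<omega> x u y' v) y\<bar> \<le> hb2 m u v
      \<and> (LINT t:{..y}|lborel. h m \<omega> x u t v) \<le> hbY0 m u v
      \<and> \<bar>deriv (\<lambda>x'. LINT t:{..y}|lborel. h m \<omega> x' u t v) x\<bar> \<le> hbY1 m u v
      \<and> \<bar>deriv (deriv (\<lambda>x'. LINT t:{..y}|lborel. h m \<omega> x' u t v)) x\<bar> \<le> hbY2 m u v)"
    using a_pos ev_small R3_dens R3_diff R3_bnd by eventually_elim blast
  then obtain N where N: "\<And>m. m \<ge> N \<Longrightarrow> a m > 0 \<and> a m * Kb < f0 / 2 \<and> (\<forall>\<omega>\<in>space Q.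
        distributed P lborel
          (\<lambda>z. (\<mu> z, (\<mu>t m \<omega> z - \<mu> z) / a m, \<pi> z, (\<pi>t m \<omega> z - \<pi> z) / a m))
          (\<lambda>(x, u, y, v). ennreal (h m \<omega> x u y v))
        \<and> (\<forall>x u y v. 0 \<le> h m \<omega> x u y v))
     \<and> (\<forall>\<omega>\<in>space Q. \<forall>x u y v.
        (\<lambda>x'. h m \<omega> x' u y v) differentiable at x
      \<and> (\<lambda>y'. h m \<omega> x u y' v) differentiable at y
      \<and> (\<lambda>x'. LINT t:{..y}|lborel. h m \<omega> x' u t v) differentiable at x
      \<and> (\<lambda>x'. deriv (\<lambda>x''. LINT t:{..y}|lborel. h m \<omega> x'' u t v) x') differentiable at x)
     \<and> (\<forall>\<omega>\<in>space Q. \<forall>x u y v.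
        h m \<omega> x u y v \<le> hb0 m u v
      \<and> \<bar>deriv (\<lambda>x'. h m \<omega> x' u y v) x\<bar> \<le> hb1 m u v
      \<and> \<bar>deriv (\<lambda>y'. h m \<omega> x u y' v) y\<bar> \<le> hb2 m u v
      \<and> (LINT t:{..y}|lborel. h m \<omega> x u t v) \<le> hbY0 m u v
      \<and> \<bar>deriv (\<lambda>x'. LINT t:{..y}|lborel. h m \<omega> x' u t v) x\<bar> \<le> hbY1 m u v
      \<and> \<bar>deriv (deriv (\<lambda>x'. LINT t:{..y}|lborel. h m \<omega> x' u t v)) x\<bar> \<le> hbY2 m u v)"
    unfolding eventually_sequentially by blast
  have bound: "\<bar>cond_prob_at P (\<mu>t m \<omega>) (\<pi>t m \<omega>) q \<theta> - cond_prob_at P \<mu> \<pi> q \<theta>\<bar> \<le> Cf * a m"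
    if m: "m \<ge> N" and \<omega>: "\<omega> \<in> space Q" for m \<omega>
  proof -
    note Nm = N[OF m]
    have am: "a m > 0" using Nm by blast
    have D: "dens4 P \<mu> (\<lambda>z. (\<mu>t m \<omega> z - \<mu> z) / a m) \<pi> (\<lambda>z. (\<pi>t m \<omega> z - \<pi> z) / a m) (h m \<omega>) (hb0 m) (hbY0 m) (hbY1 m)"
    proof (rule dens4.intro)
      show "prob_space P" by (rule P(1))
      show "distributed P lborel (\<lambda>z. (\<mu> z, (\<mu>t m \<omega> z - \<mu> z) / a m, \<pi> z, (\<pi>t m \<omega> z - \<pi> z) / a m)) (\<lambda>(x, u, y, v). ennreal (h m \<omega> x u y v))"
        using Nm \<omega> by blast
      show "\<And>x u y v. 0 \<le> h m \<omega> x u y v" using Nm \<omega> by blast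
      show "\<And>x u y v. h m \<omega> x u y v \<le> hb0 m u v" using Nm \<omega> by blast
      show "\<And>x u y v. (LINT t:{..y}|lborel. h m \<omega> x u t v) \<le> hbY0 m u v" using Nm \<omega> by blast
      show "\<And>x u y v. (\<lambda>x'. LINT t:{..y}|lborel. h m \<omega> x' u t v) differentiable at x" using Nm \<omega> by blast
      show "\<And>x u y v. \<bar>deriv (\<lambda>x'. LINT t:{..y}|lborel. h m \<omega> x' u t v) x\<bar> \<le> hbY1 m u v" using Nm \<omega> by blast
      show "(\<lambda>(u, v). hb0 m u v) \<in> borel_measurable lborel" using I0 by blast
      show "(\<lambda>(u, v). hbY0 m u v) \<in> borel_measurable lborel" using IY0 by blast
      show "(\<lambda>(u, v). hbY1 m u v) \<in> borel_measurable lborel" using IY1 by blast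
      show "integrable lborel (\<lambda>(u, v). (1 + \<bar>u\<bar> + \<bar>v\<bar>) * hb0 m u v)" using i0(1) by blast
      show "integrable lborel (\<lambda>(u, v). (1 + \<bar>u\<bar> + \<bar>v\<bar>) * hbY0 m u v)" using iY0(1) by blast
      show "integrable lborel (\<lambda>(u, v). (1 + \<bar>u\<bar> + \<bar>v\<bar>) * hbY1 m u v)" using iY1(1) by blast
    qed
    have Kb: "dens4.K (hb0 m) (hbY1 m) \<le> Kb"
    proof -
      have "dens4.K (hb0 m) (hbY1 m) \<le> (\<integral>p. (1 + \<bar>fst p\<bar> + \<bar>snd p\<bar>) * hbY1 m (fst p) (snd p) \<partial>lborel) + (\<integral>p. (1 + \<bar>fst p\<bar> + \<bar>snd p\<bar>) * hb0 m (fst p) (snd p) \<partial>lborel)"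
        by (rule dens4.K_le[OF D])
      also have "\<dots> \<le> Kb" unfolding Kb_def using i0(2) iY1(2) I0 IY1 by (intro add_mono) blast+
      finally show ?thesis .
    qed
    have Bd: "dens4.IB0 (hbY0 m) \<le> Bd"
      using order_trans[OF dens4.IB0_le[OF D]] iY0(2) IY0 unfolding Bd_def by blast
    have st: "\<bar>cond_prob_at P (\<lambda>z. \<mu> z + a m * ((\<mu>t m \<omega> z - \<mu> z) / a m)) (\<lambda>z. \<pi> z + a m * ((\<pi>t m \<omega> z - \<pi> z) / a m)) q \<theta> - cond_prob_at P \<mu> \<pi> q \<theta>\<bar>
          \<le> a m * Kb * (2 / f0 + 2 * Bd / (f0 * f0))"
      by (rule dens4.main_step[OF D f0 dq Kb Bd am]) (use Nm in linarith)
    have e1: "(\<lambda>z. \<mu> z + a m * ((\<mu>t m \<omega> z - \<mu> z) / a m)) = \<mu>t m \<omega>" using am by (auto simp: fun_eq_iff)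
    have e2: "(\<lambda>z. \<pi> z + a m * ((\<pi>t m \<omega> z - \<pi> z) / a m)) = \<pi>t m \<omega>" using am by (auto simp: fun_eq_iff)
    show ?thesis using st unfolding e1 e2 Cf_def by (simp add: algebra_simps)
  qed
  show ?thesis
    unfolding bigO_P_def
  proof (intro allI impI)
    fix \<epsilon> :: real assume \<epsilon>: "\<epsilon> > 0"
    show "\<exists>C N. \<forall>m\<ge>N. \<exists>A\<in>sets Q. {\<omega> \<in> space Q. \<bar>ereal (cond_prob_at P (\<mu>t m \<omega>) (\<pi>t m \<omega>) q \<theta> - cond_prob_at P \<mu> \<pi> q \<theta>)\<bar> > ereal (C * a m)} \<subseteq> A \<and> measure Q A < \<epsilon>"
    proof (intro exI allI impI bexI[of _ "{}"] conjI)
      fix m assume m: "m \<ge> N"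
      show "{\<omega> \<in> space Q. \<bar>ereal (cond_prob_at P (\<mu>t m \<omega>) (\<pi>t m \<omega>) q \<theta> - cond_prob_at P \<mu> \<pi> q \<theta>)\<bar> > ereal (Cf * a m)} \<subseteq> {}"
        using bound[OF m] by (auto simp: not_less)
      show "measure Q {} < \<epsilon>" using \<epsilon> by simp
      show "{} \<in> sets Q" by simp
    qed
  qed
qed

end
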